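(* Suppose that $(R,\mathfrak m)$ is $F$-pure and let $(\mathfrak a_\lambda)_{\lambda\in\Lambda}$ be a non-empty family of fully $\Phi(E)$-special ideals of $R$. Then $\sum_{\lambda\in\Lambda}\mathfrak a_\lambda$ is fully $\Phi(E)$-special.
   Context: $(R,\mathfrak m)$ is a commutative Noetherian local ring of prime characteristic $p$. $R$ is $F$-pure if for every $R$-module $M$ the map $M\to R^{(1)}\otimes_RM$, $m\mapsto1\otimes m$, is injective ($R^{(1)}$ = $R$ with right structure via $r\mapsto r^p$). The Frobenius skew polynomial ring $R[x,f]$ consists of polynomials $\sum r_ix^i$, free left $R$-module on $(x^i)_{i\ge0}$, with $xr=r^px$. $E=E_R(R/\mathfrak m)$; $\Phi(E)=R[x,f]\otimes_RE=\bigoplus_nRx^n\otimes_RE$, with $0$th component identified with $E$. $\operatorname{ann}_{\Phi(E)}(\mathfrak aR[x,f])$ is the submodule of elements annihilated by all $rx^n$, $r\in\mathfrak a$, $n\ge0$; $\mathfrak a$ is fully $\Phi(E)$-special if $(0:_E\mathfrak a)$ is contained in the $0$th component of $\operatorname{ann}_{\Phi(E)}(\mathfrak aR[x,f])$. *)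

theory Defs
  imports "HOL-Algebra.Algebra" "HOL-Computational_Algebra.Primes"
begin

definition local_ring :: "('r, 'b) ring_scheme \<Rightarrow> 'r set \<Rightarrow> bool" where
  "local_ring R m \<longleftrightarrow> cring R \<and> maximalideal m R \<and>
     (\<forall>I. maximalideal I R \<longrightarrow> I = m)"

definition char_p :: "('r, 'b) ring_scheme \<Rightarrow> nat \<Rightarrow> bool" where
  "char_p R p \<longleftrightarrow> Factorial_Ring.prime p \<and> add_pow R p \<one>\<^bsub>R\<^esub> = \<zero>\<^bsub>R\<^esub>"

definition lin_on :: "('r, 'b) ring_scheme \<Rightarrow> ('r, 'm) module \<Rightarrow> ('r, 'n) module
    \<Rightarrow> 'm set \<Rightarrow> ('m \<Rightarrow> 'n) \<Rightarrow> bool" where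
  "lin_on R M N S f \<longleftrightarrow> f ` S \<subseteq> carrier N \<and>
     (\<forall>x\<in>S. \<forall>y\<in>S. f (x \<oplus>\<^bsub>M\<^esub> y) = f x \<oplus>\<^bsub>N\<^esub> f y) \<and>
     (\<forall>r\<in>carrier R. \<forall>x\<in>S. f (r \<odot>\<^bsub>M\<^esub> x) = r \<odot>\<^bsub>N\<^esub> f x)"

text \<open>R x^n, as a right R-module, is the additive group of R with right action
  (r x^n) s = r s^(p^n) x^n.  The tensor product  R x^n \<otimes>_R M  is the free abelian
  group on (carrier R) \<times> (carrier M) modulo the subgroup generated by the biadditivity
  relations and the balancing relation  (r x^n) s \<otimes> x = r x^n \<otimes> s x.
  Below q stands for p^n; elements of the free abelian group are finitely supported
  integer-valued functions; gen a x is the basis element (a, x).\<close>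

definition gen :: "'r \<Rightarrow> 'm \<Rightarrow> ('r \<times> 'm \<Rightarrow> int)" where
  "gen a x = (\<lambda>z. if z = (a, x) then 1 else 0)"

inductive_set tensor_rel :: "('r, 'b) ring_scheme \<Rightarrow> ('r, 'm) module \<Rightarrow> nat
    \<Rightarrow> ('r \<times> 'm \<Rightarrow> int) set"
  for R M q where
  rel_zero: "(\<lambda>_. 0) \<in> tensor_rel R M q"
| rel_add: "u \<in> tensor_rel R M q \<Longrightarrow> v \<in> tensor_rel R M q
     \<Longrightarrow> (\<lambda>z. u z + v z) \<in> tensor_rel R M q"
| rel_neg: "u \<in> tensor_rel R M q \<Longrightarrow> (\<lambda>z. - u z) \<in> tensor_rel R M q"
| rel_addl: "\<lbrakk>a \<in> carrier R; b \<in> carrier R; x \<in> carrier M\<rbrakk> \<Longrightarrow>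
     (\<lambda>z. gen (a \<oplus>\<^bsub>R\<^esub> b) x z - gen a x z - gen b x z) \<in> tensor_rel R M q"
| rel_addr: "\<lbrakk>a \<in> carrier R; x \<in> carrier M; y \<in> carrier M\<rbrakk> \<Longrightarrow>
     (\<lambda>z. gen a (x \<oplus>\<^bsub>M\<^esub> y) z - gen a x z - gen a y z) \<in> tensor_rel R M q"
| rel_bal: "\<lbrakk>a \<in> carrier R; s \<in> carrier R; x \<in> carrier M\<rbrakk> \<Longrightarrow>
     (\<lambda>z. gen (a \<otimes>\<^bsub>R\<^esub> (s [^]\<^bsub>R\<^esub> q)) x z - gen a (s \<odot>\<^bsub>M\<^esub> x) z) \<in> tensor_rel R M q"

definition tensor_eq :: "('r, 'b) ring_scheme \<Rightarrow> ('r, 'm) module \<Rightarrow> nat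
    \<Rightarrow> 'r \<Rightarrow> 'm \<Rightarrow> 'r \<Rightarrow> 'm \<Rightarrow> bool" where
  "tensor_eq R M q a x b y \<longleftrightarrow> (\<lambda>z. gen a x z - gen b y z) \<in> tensor_rel R M q"

definition tensor_zero :: "('r, 'b) ring_scheme \<Rightarrow> ('r, 'm) module \<Rightarrow> nat
    \<Rightarrow> 'r \<Rightarrow> 'm \<Rightarrow> bool" where
  "tensor_zero R M q a x \<longleftrightarrow> gen a x \<in> tensor_rel R M q"

text \<open>R is F-pure: for every R-module M the map M \<rightarrow> R^(1) \<otimes>_R M, x \<mapsto> 1 \<otimes> x, is
  injective.  Modules are taken with carriers in the universe type 'u
  (instantiated in the statement with a type large enough).\<close>
definition F_pure :: "'u itself \<Rightarrow> ('r, 'b) ring_scheme \<Rightarrow> nat \<Rightarrow> bool" where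
  "F_pure _ R p \<longleftrightarrow> (\<forall>M :: ('r, 'u) module. module R M \<longrightarrow>
     (\<forall>x\<in>carrier M. \<forall>y\<in>carrier M.
        tensor_eq R M p \<one>\<^bsub>R\<^esub> x \<one>\<^bsub>R\<^esub> y \<longrightarrow> x = y))"

definition injective_module :: "'u itself \<Rightarrow> ('r, 'b) ring_scheme \<Rightarrow> ('r, 'e) module \<Rightarrow> bool" where
  "injective_module _ R E \<longleftrightarrow> module R E \<and>
     (\<forall>(M :: ('r, 'u) module) N f. module R M \<and> submodule N R M \<and> lin_on R M E N f \<longrightarrow>
        (\<exists>g. lin_on R M E (carrier M) g \<and> (\<forall>x\<in>N. g x = f x)))"

text \<open>E = E_R(R/m): an injective module together with an essential monomorphism
  R/m \<rightarrow> E; e0 is the image of the class of 1, so its annihilator is m, the image is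
  R e0, and essentiality says every nonzero submodule of E meets R e0 nontrivially.\<close>
definition injective_hull_residue :: "'u itself \<Rightarrow> ('r, 'b) ring_scheme \<Rightarrow> 'r set
    \<Rightarrow> ('r, 'e) module \<Rightarrow> bool" where
  "injective_hull_residue U R m E \<longleftrightarrow> injective_module U R E \<and>
     (\<exists>e0\<in>carrier E. {r \<in> carrier R. r \<odot>\<^bsub>E\<^esub> e0 = \<zero>\<^bsub>E\<^esub>} = m \<and>
        (\<forall>N. submodule N R E \<and> N \<noteq> {\<zero>\<^bsub>E\<^esub>} \<longrightarrow>
           (\<exists>r\<in>carrier R. r \<odot>\<^bsub>E\<^esub> e0 \<noteq> \<zero>\<^bsub>E\<^esub> \<and> r \<odot>\<^bsub>E\<^esub> e0 \<in> N)))"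

definition ann_E :: "('r, 'b) ring_scheme \<Rightarrow> ('r, 'e) module \<Rightarrow> 'r set \<Rightarrow> 'e set" where
  "ann_E R E a = {e \<in> carrier E. \<forall>r\<in>a. r \<odot>\<^bsub>E\<^esub> e = \<zero>\<^bsub>E\<^esub>}"

text \<open>The 0th component of ann_{Phi(E)}(a R[x,f]), as a subset of E = R x^0 \<otimes> E:
  e (i.e. 1 \<otimes> e in degree 0) is annihilated by every r x^n with r \<in> a, and
  r x^n \<cdot> (1 \<otimes> e) = r x^n \<otimes> e in the degree-n component R x^n \<otimes>_R E.\<close>
definition ann_Phi_deg0 :: "('r, 'b) ring_scheme \<Rightarrow> nat \<Rightarrow> ('r, 'e) module \<Rightarrow> 'r set \<Rightarrow> 'e set" where
  "ann_Phi_deg0 R p E a = {e \<in> carrier E. \<forall>n::nat. \<forall>r\<in>a. tensor_zero R E (p ^ n) r e}"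

definition fully_Phi_special :: "('r, 'b) ring_scheme \<Rightarrow> nat \<Rightarrow> ('r, 'e) module \<Rightarrow> 'r set \<Rightarrow> bool" where
  "fully_Phi_special R p E a \<longleftrightarrow> ann_E R E a \<subseteq> ann_Phi_deg0 R p E a"

end

theory Submission
  imports Defs
begin

lemma tz_add:
  assumes "a \<in> carrier R" "b \<in> carrier R" "x \<in> carrier M"
    and "tensor_zero R M q a x" "tensor_zero R M q b x"
  shows "tensor_zero R M q (a \<oplus>\<^bsub>R\<^esub> b) x"
proof -
  have 1: "(\<lambda>z. gen (a \<oplus>\<^bsub>R\<^esub> b) x z - gen a x z - gen b x z) \<in> tensor_rel R M q"
    using assms(1-3) by (rule tensor_rel.rel_addl)
  have 2: "(\<lambda>z. (\<lambda>z. gen (a \<oplus>\<^bsub>R\<^esub> b) x z - gen a x z - gen b x z) z + gen a x z) \<in> tensor_rel R M q"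
    using 1 assms(4) unfolding tensor_zero_def by (rule tensor_rel.rel_add)
  have 3: "(\<lambda>z. (\<lambda>z. (\<lambda>z. gen (a \<oplus>\<^bsub>R\<^esub> b) x z - gen a x z - gen b x z) z + gen a x z) z + gen b x z) \<in> tensor_rel R M q"
    using 2 assms(5) unfolding tensor_zero_def by (rule tensor_rel.rel_add)
  have "(\<lambda>z. (\<lambda>z. (\<lambda>z. gen (a \<oplus>\<^bsub>R\<^esub> b) x z - gen a x z - gen b x z) z + gen a x z) z + gen b x z)
     = gen (a \<oplus>\<^bsub>R\<^esub> b) x" by (rule ext) simp
  with 3 show ?thesis unfolding tensor_zero_def by simp
qed

theorem proposition1p9:
  fixes R :: "('r, 'b) ring_scheme" and m :: "'r set" and p :: nat
    and E :: "('r, 'e) module" and Lam :: "'i set" and \<aa> :: "'i \<Rightarrow> 'r set"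
  assumes "noetherian_ring R"
    and "local_ring R m"
    and "char_p R p"
    and "F_pure TYPE('r list) R p"
    and "injective_hull_residue TYPE('r list) R m E"
    and "Lam \<noteq> {}"
    and "\<forall>l\<in>Lam. ideal (\<aa> l) R \<and> fully_Phi_special R p E (\<aa> l)"
  shows "fully_Phi_special R p E (genideal R (\<Union>l\<in>Lam. \<aa> l))"
proof -
  have cr: "cring R" using assms(2) unfolding local_ring_def by simp
  then interpret cring R .
  have sub: "(\<Union>l\<in>Lam. \<aa> l) \<subseteq> carrier R"
    using assms(7) by (auto dest!: ideal.axioms(1) additive_subgroup.a_subset)
  obtain l0 where l0: "l0 \<in> Lam" using assms(6) by blast
  show ?thesis unfolding fully_Phi_special_def
  proof
    fix e assume e: "e \<in> ann_E R E (genideal R (\<Union>l\<in>Lam. \<aa> l))"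
    have eE: "e \<in> carrier E" using e unfolding ann_E_def by simp
    have tzl: "\<And>l n r. l \<in> Lam \<Longrightarrow> r \<in> \<aa> l \<Longrightarrow> tensor_zero R E (p ^ n) r e"
    proof -
      fix l n r assume l: "l \<in> Lam" and r: "r \<in> \<aa> l"
      have "\<aa> l \<subseteq> genideal R (\<Union>l\<in>Lam. \<aa> l)"
        using genideal_self[OF sub] l by blast
      hence "e \<in> ann_E R E (\<aa> l)" using e unfolding ann_E_def by blast
      hence "e \<in> ann_Phi_deg0 R p E (\<aa> l)"
        using assms(7) l unfolding fully_Phi_special_def by blast
      thus "tensor_zero R E (p ^ n) r e" using r unfolding ann_Phi_deg0_def by blast
    qed
    have "\<forall>n. \<forall>r\<in>genideal R (\<Union>l\<in>Lam. \<aa> l). tensor_zero R E (p ^ n) r e"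
    proof (intro allI)
      fix n
      define S where "S = {r \<in> carrier R. \<forall>s\<in>carrier R. tensor_zero R E (p ^ n) (s \<otimes>\<^bsub>R\<^esub> r) e}"
      have idS: "ideal S R"
      proof (rule idealI)
        show "ring R" by (rule ring_axioms)
        show "subgroup S (add_monoid R)"
        proof (rule subgroup.intro)
          show "S \<subseteq> carrier (add_monoid R)" unfolding S_def by auto
          show "\<And>x y. x \<in> S \<Longrightarrow> y \<in> S \<Longrightarrow> x \<otimes>\<^bsub>add_monoid R\<^esub> y \<in> S"
          proof -
            fix x y assume x: "x \<in> S" and y: "y \<in> S"
            show "x \<otimes>\<^bsub>add_monoid R\<^esub> y \<in> S"
              unfolding S_def
            proof (simp, intro conjI ballI)
              show "x \<oplus>\<^bsub>R\<^esub> y \<in> carrier R" using x y unfolding S_def by auto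
              fix s assume s: "s \<in> carrier R"
              have "s \<otimes>\<^bsub>R\<^esub> (x \<oplus>\<^bsub>R\<^esub> y) = s \<otimes>\<^bsub>R\<^esub> x \<oplus>\<^bsub>R\<^esub> s \<otimes>\<^bsub>R\<^esub> y"
                using x y s unfolding S_def by (simp add: r_distr)
              moreover have "tensor_zero R E (p ^ n) (s \<otimes>\<^bsub>R\<^esub> x \<oplus>\<^bsub>R\<^esub> s \<otimes>\<^bsub>R\<^esub> y) e"
                using x y s eE unfolding S_def by (intro tz_add) auto
              ultimately show "tensor_zero R E (p ^ n) (s \<otimes>\<^bsub>R\<^esub> (x \<oplus>\<^bsub>R\<^esub> y)) e" by simp
            qed
          qed
          show "\<one>\<^bsub>add_monoid R\<^esub> \<in> S"
          proof -
            have "\<zero>\<^bsub>R\<^esub> \<in> \<aa> l0" using assms(7) l0 by (auto intro: additive_subgroup.zero_closed dest: ideal.axioms(1))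
            moreover have "\<And>s. s \<in> carrier R \<Longrightarrow> s \<otimes>\<^bsub>R\<^esub> \<zero>\<^bsub>R\<^esub> = \<zero>\<^bsub>R\<^esub>" by simp
            ultimately show ?thesis unfolding S_def using tzl[OF l0] by auto
          qed
          show "\<And>x. x \<in> S \<Longrightarrow> inv\<^bsub>add_monoid R\<^esub> x \<in> S"
          proof -
            fix x assume x: "x \<in> S"
            have xc: "x \<in> carrier R" using x unfolding S_def by auto
            have "inv\<^bsub>add_monoid R\<^esub> x = \<ominus>\<^bsub>R\<^esub> x" by (simp add: a_inv_def)
            moreover have "\<ominus>\<^bsub>R\<^esub> x \<in> S" unfolding S_def
            proof (intro CollectI conjI ballI)
              show "\<ominus>\<^bsub>R\<^esub> x \<in> carrier R" using xc by simp
              fix s assume s: "s \<in> carrier R"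
              have "s \<otimes>\<^bsub>R\<^esub> (\<ominus>\<^bsub>R\<^esub> x) = (\<ominus>\<^bsub>R\<^esub> s) \<otimes>\<^bsub>R\<^esub> x" using s xc by (simp add: r_minus l_minus)
              moreover have "tensor_zero R E (p ^ n) ((\<ominus>\<^bsub>R\<^esub> s) \<otimes>\<^bsub>R\<^esub> x) e"
                using x s unfolding S_def by simp
              ultimately show "tensor_zero R E (p ^ n) (s \<otimes>\<^bsub>R\<^esub> \<ominus>\<^bsub>R\<^esub> x) e" by simp
            qed
            ultimately show "inv\<^bsub>add_monoid R\<^esub> x \<in> S" by simp
          qed
        qed
        show "\<And>a x. a \<in> S \<Longrightarrow> x \<in> carrier R \<Longrightarrow> x \<otimes>\<^bsub>R\<^esub> a \<in> S"
        proof -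
          fix a x assume a: "a \<in> S" and x: "x \<in> carrier R"
          have ac: "a \<in> carrier R" using a unfolding S_def by auto
          show "x \<otimes>\<^bsub>R\<^esub> a \<in> S" unfolding S_def
          proof (intro CollectI conjI ballI)
            show "x \<otimes>\<^bsub>R\<^esub> a \<in> carrier R" using ac x by simp
            fix s assume s: "s \<in> carrier R"
            have "s \<otimes>\<^bsub>R\<^esub> (x \<otimes>\<^bsub>R\<^esub> a) = (s \<otimes>\<^bsub>R\<^esub> x) \<otimes>\<^bsub>R\<^esub> a" using s x ac by (simp add: m_assoc)
            moreover have "tensor_zero R E (p ^ n) ((s \<otimes>\<^bsub>R\<^esub> x) \<otimes>\<^bsub>R\<^esub> a) e"
              using a s x unfolding S_def by simp
            ultimately show "tensor_zero R E (p ^ n) (s \<otimes>\<^bsub>R\<^esub> (x \<otimes>\<^bsub>R\<^esub> a)) e" by simp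
          qed
        qed
        note lc = this
        show "\<And>a x. a \<in> S \<Longrightarrow> x \<in> carrier R \<Longrightarrow> a \<otimes>\<^bsub>R\<^esub> x \<in> S"
        proof -
          fix a x assume a: "a \<in> S" and x: "x \<in> carrier R"
          have "a \<otimes>\<^bsub>R\<^esub> x = x \<otimes>\<^bsub>R\<^esub> a" using a x unfolding S_def by (simp add: m_comm)
          with lc[OF a x] show "a \<otimes>\<^bsub>R\<^esub> x \<in> S" by simp
        qed
      qed
      have "(\<Union>l\<in>Lam. \<aa> l) \<subseteq> S"
      proof
        fix r assume "r \<in> (\<Union>l\<in>Lam. \<aa> l)"
        then obtain l where l: "l \<in> Lam" "r \<in> \<aa> l" by blast
        have "ideal (\<aa> l) R" using assms(7) l by blast
        hence "\<And>s. s \<in> carrier R \<Longrightarrow> s \<otimes>\<^bsub>R\<^esub> r \<in> \<aa> l" using l(2) by (rule ideal.I_l_closed)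
        thus "r \<in> S" unfolding S_def using tzl[OF l(1)] sub l by auto
      qed
      hence "genideal R (\<Union>l\<in>Lam. \<aa> l) \<subseteq> S" by (rule genideal_minimal[OF idS])
      show "\<forall>r\<in>genideal R (\<Union>l\<in>Lam. \<aa> l). tensor_zero R E (p ^ n) r e"
      proof
        fix r assume "r \<in> genideal R (\<Union>l\<in>Lam. \<aa> l)"
        with \<open>genideal R (\<Union>l\<in>Lam. \<aa> l) \<subseteq> S\<close> have "r \<in> S" by blast
        hence rc: "r \<in> carrier R" and "\<forall>s\<in>carrier R. tensor_zero R E (p ^ n) (s \<otimes>\<^bsub>R\<^esub> r) e" unfolding S_def by auto
        hence "tensor_zero R E (p ^ n) (\<one>\<^bsub>R\<^esub> \<otimes>\<^bsub>R\<^esub> r) e" using one_closed by blast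
        thus "tensor_zero R E (p ^ n) r e" using rc by (simp add: l_one)
      qed
    qed
    thus "e \<in> ann_Phi_deg0 R p E (genideal R (\<Union>l\<in>Lam. \<aa> l))"
      unfolding ann_Phi_deg0_def using eE by blast
  qed
qed

end
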